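(* For every integer $t$ there exists a finite simple graph $G$ with $\Delta_2(G) \geq t$ and $\chi(G) > \max\{\omega(G), \Delta_2(G)\}$.
   Context: $\chi(G)$ is the chromatic number and $\omega(G)$ the clique number. $\Delta_2(G)$ is the largest degree that a vertex $v$ of $G$ can have subject to the condition that $v$ is adjacent to a vertex whose degree is at least as large as the degree of $v$. *)

theory Defs
  imports Main
begin

definition simple_graph :: "'a set \<Rightarrow> 'a set set \<Rightarrow> bool" where
  "simple_graph V E \<longleftrightarrow> finite V \<and> (\<forall>e\<in>E. e \<subseteq> V \<and> card e = 2)"

definition adj :: "'a set set \<Rightarrow> 'a \<Rightarrow> 'a \<Rightarrow> bool" where
  "adj E u v \<longleftrightarrow> {u, v} \<in> E"

definition degree :: "'a set \<Rightarrow> 'a set set \<Rightarrow> 'a \<Rightarrow> nat" where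
  "degree V E v = card {u \<in> V. adj E v u}"

definition is_clique :: "'a set \<Rightarrow> 'a set set \<Rightarrow> 'a set \<Rightarrow> bool" where
  "is_clique V E K \<longleftrightarrow> K \<subseteq> V \<and> (\<forall>u\<in>K. \<forall>v\<in>K. u \<noteq> v \<longrightarrow> adj E u v)"

definition clique_number :: "'a set \<Rightarrow> 'a set set \<Rightarrow> nat" where
  "clique_number V E = Max {card K | K. is_clique V E K}"

definition proper_colouring :: "'a set \<Rightarrow> 'a set set \<Rightarrow> nat \<Rightarrow> ('a \<Rightarrow> nat) \<Rightarrow> bool" where
  "proper_colouring V E k c \<longleftrightarrow>
     (\<forall>v\<in>V. c v < k) \<and> (\<forall>u\<in>V. \<forall>v\<in>V. adj E u v \<longrightarrow> c u \<noteq> c v)"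

definition chromatic_number :: "'a set \<Rightarrow> 'a set set \<Rightarrow> nat" where
  "chromatic_number V E = (LEAST k. \<exists>c. proper_colouring V E k c)"

definition Delta2 :: "'a set \<Rightarrow> 'a set set \<Rightarrow> nat" where
  "Delta2 V E = Max (insert 0 {degree V E v | v. v \<in> V \<and>
       (\<exists>u\<in>V. adj E v u \<and> degree V E u \<ge> degree V E v)})"

end

theory Submission
  imports Defs
begin

definition VV :: "nat \<Rightarrow> nat set" where "VV n = {0..2*n}"

definition PP :: "nat \<Rightarrow> nat \<Rightarrow> nat \<Rightarrow> bool" where
  "PP n u v \<longleftrightarrow> u \<noteq> v \<and> ((u \<in> {1..n} \<and> v \<in> {1..n}) \<or> (u \<in> {n+1..2*n} \<and> v \<in> {n+1..2*n})
     \<or> (u = 0 \<and> v \<in> {2..n}) \<or> (v = 0 \<and> u \<in> {2..n})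
     \<or> (u = 0 \<and> v \<in> {n+2..2*n}) \<or> (v = 0 \<and> u \<in> {n+2..2*n})
     \<or> (u = 1 \<and> v = n+1) \<or> (v = 1 \<and> u = n+1))"

definition EE :: "nat \<Rightarrow> nat set set" where "EE n = {{u,v} | u v. PP n u v}"

lemma PP_sym: "PP n u v = PP n v u" unfolding PP_def by auto

lemma adj_EE: "adj (EE n) u v \<longleftrightarrow> PP n u v"
  unfolding adj_def EE_def
  by (auto simp: doubleton_eq_iff PP_sym)

lemma simple: "simple_graph (VV n) (EE n)"
  unfolding simple_graph_def VV_def EE_def
  by (auto simp: PP_def card_2_iff)

lemma deg0:
  assumes "n \<ge> 3"
  shows "degree (VV n) (EE n) 0 = 2*n - 2"
proof -
  have "{u \<in> VV n. adj (EE n) 0 u} = {2..n} \<union> {n+2..2*n}"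
    unfolding adj_EE VV_def PP_def by auto
  moreover have "card ({2..n} \<union> {n+2..2*n}) = (n - 1) + (n - 1)"
    by (subst card_Un_disjoint) auto
  ultimately show ?thesis unfolding degree_def using assms by simp
qed

lemma degA:
  assumes "n \<ge> 3" "v \<in> {1..n}"
  shows "degree (VV n) (EE n) v = n"
proof -
  have "{u \<in> VV n. adj (EE n) v u} = ({1..n} - {v}) \<union> {if v = 1 then n+1 else 0}"
    unfolding adj_EE VV_def PP_def using assms by auto
  moreover have "card (({1..n} - {v}) \<union> {if v = 1 then n+1 else 0}) = (n - 1) + 1"
    by (subst card_Un_disjoint) (use assms in auto)
  ultimately show ?thesis unfolding degree_def using assms by simp
qed

lemma degB:
  assumes "n \<ge> 3" "v \<in> {n+1..2*n}"
  shows "degree (VV n) (EE n) v = n"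
proof -
  have "{u \<in> VV n. adj (EE n) v u} = ({n+1..2*n} - {v}) \<union> {if v = n+1 then 1 else 0}"
    unfolding adj_EE VV_def PP_def using assms by auto
  moreover have "card (({n+1..2*n} - {v}) \<union> {if v = n+1 then 1 else 0}) = (n - 1) + 1"
    by (subst card_Un_disjoint) (use assms in auto)
  ultimately show ?thesis unfolding degree_def using assms by simp
qed

lemma degpos:
  assumes "n \<ge> 3" "v \<in> VV n" "v \<noteq> 0"
  shows "degree (VV n) (EE n) v = n"
proof (cases "v \<le> n")
  case True then show ?thesis using degA[OF assms(1)] assms by auto
next
  case False then show ?thesis using degB[OF assms(1)] assms by (auto simp: VV_def)
qed

lemma Delta2_val:
  assumes "n \<ge> 3"
  shows "Delta2 (VV n) (EE n) = n"
proof -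
  let ?d = "degree (VV n) (EE n)"
  have "{?d v | v. v \<in> VV n \<and> (\<exists>u\<in>VV n. adj (EE n) v u \<and> ?d u \<ge> ?d v)} = {n}"
  proof (rule set_eqI, rule iffI)
    fix x assume "x \<in> {?d v | v. v \<in> VV n \<and> (\<exists>u\<in>VV n. adj (EE n) v u \<and> ?d u \<ge> ?d v)}"
    then obtain v u where v: "x = ?d v" "v \<in> VV n" "u \<in> VV n" "adj (EE n) v u" "?d u \<ge> ?d v"
      by blast
    show "x \<in> {n}"
    proof (cases "v = 0")
      case True
      then have "u \<noteq> 0" using v(4) by (simp add: adj_EE PP_def)
      then show ?thesis using v True deg0[OF assms] degpos[OF assms] assms by auto
    next
      case False then show ?thesis using v degpos[OF assms] by auto
    qed
  next
    fix x assume "x \<in> {n}"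
    hence x: "x = n" by simp
    have "2 \<in> VV n" "1 \<in> VV n" "adj (EE n) 1 2" using assms
      by (auto simp: VV_def adj_EE PP_def)
    moreover have "?d 1 = n" "?d 2 = n" using degpos[OF assms] assms by (auto simp: VV_def)
    ultimately show "x \<in> {?d v | v. v \<in> VV n \<and> (\<exists>u\<in>VV n. adj (EE n) v u \<and> ?d u \<ge> ?d v)}"
      using x by force
  qed
  then show ?thesis unfolding Delta2_def using assms by simp
qed

lemma clique_card:
  assumes "n \<ge> 3" "is_clique (VV n) (EE n) K"
  shows "card K \<le> n"
proof -
  have KV: "K \<subseteq> {0..2*n}" and cl: "\<And>u v. u \<in> K \<Longrightarrow> v \<in> K \<Longrightarrow> u \<noteq> v \<Longrightarrow> PP n u v"
    using assms(2) unfolding is_clique_def VV_def adj_EE by auto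
  show ?thesis
  proof (cases "\<exists>a\<in>K. \<exists>b\<in>K. a \<in> {1..n} \<and> b \<in> {n+1..2*n}")
    case True
    then obtain a b where ab: "a \<in> K" "b \<in> K" "a \<in> {1..n}" "b \<in> {n+1..2*n}" by blast
    have "a \<noteq> b" using ab by auto
    hence "PP n a b" using cl ab by auto
    hence a1: "a = 1" "b = n+1" using ab by (auto simp: PP_def)
    have "K \<subseteq> {1, n+1}"
    proof
      fix z assume z: "z \<in> K"
      show "z \<in> {1, n+1}"
      proof (rule ccontr)
        assume "z \<notin> {1, n+1}"
        hence "PP n z 1" "PP n z (n+1)" using cl z ab a1 by auto
        thus False unfolding PP_def using assms by auto
      qed
    qed
    hence "card K \<le> card {1, n+1}" by (intro card_mono) auto
    also have "\<dots> \<le> 2" by (simp add: card_insert_le_m1)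
    finally show ?thesis using assms by simp
  next
    case False
    have disj: "K \<subseteq> {0..n} \<or> K \<subseteq> insert 0 {n+1..2*n}"
    proof (rule ccontr)
      assume "\<not> ?thesis"
      then obtain a b where "a \<in> K" "a \<notin> {0..n}" "b \<in> K" "b \<notin> insert 0 {n+1..2*n}"
        by blast
      moreover have "a \<le> 2*n" "b \<le> 2*n" using KV calculation by auto
      ultimately have "b \<in> {1..n}" "a \<in> {n+1..2*n}" by auto
      thus False using False \<open>a \<in> K\<close> \<open>b \<in> K\<close> by blast
    qed
    show ?thesis
    proof (cases "0 \<in> K")
      case True
      have n1: "1 \<notin> K" using cl[OF True, of 1] by (auto simp: PP_def)
      have n2: "n+1 \<notin> K" using cl[OF True, of "n+1"] by (auto simp: PP_def)
      from disj show ?thesis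
      proof
        assume "K \<subseteq> {0..n}"
        have "K \<subseteq> insert 0 {2..n}"
        proof
          fix z assume z: "z \<in> K"
          hence "z \<le> n" "z \<noteq> 1" using \<open>K \<subseteq> {0..n}\<close> n1 by auto
          thus "z \<in> insert 0 {2..n}" by auto
        qed
        hence "card K \<le> card (insert 0 {2..n})" by (intro card_mono) auto
        also have "\<dots> = n" using assms by simp
        finally show ?thesis .
      next
        assume "K \<subseteq> insert 0 {n+1..2*n}"
        have "K \<subseteq> insert 0 {n+2..2*n}"
        proof
          fix z assume z: "z \<in> K"
          hence "z = 0 \<or> (n+1 \<le> z \<and> z \<le> 2*n)" "z \<noteq> n+1" using \<open>K \<subseteq> insert 0 {n+1..2*n}\<close> n2 by auto
          thus "z \<in> insert 0 {n+2..2*n}" by auto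
        qed
        hence "card K \<le> card (insert 0 {n+2..2*n})" by (intro card_mono) auto
        also have "\<dots> = n" using assms by simp
        finally show ?thesis .
      qed
    next
      case False
      from disj show ?thesis
      proof
        assume "K \<subseteq> {0..n}"
        hence "K \<subseteq> {1..n}" using False by (auto simp: subset_eq) (metis Suc_leI not_gr0)
        hence "card K \<le> card {1..n}" by (intro card_mono) auto
        thus ?thesis by simp
      next
        assume "K \<subseteq> insert 0 {n+1..2*n}"
        hence "K \<subseteq> {n+1..2*n}" using False by auto
        hence "card K \<le> card {n+1..2*n}" by (intro card_mono) auto
        thus ?thesis by simp
      qed
    qed
  qed
qed

lemma clique_le:
  assumes "n \<ge> 3"
  shows "clique_number (VV n) (EE n) \<le> n"
proof -
  have fin: "finite {card K | K. is_clique (VV n) (EE n) K}"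
    by (rule finite_subset[of _ "{..n}"]) (auto dest: clique_card[OF assms])
  have ne: "{card K | K. is_clique (VV n) (EE n) K} \<noteq> {}"
    using is_clique_def[of "VV n" "EE n" "{}"] by auto
  show ?thesis unfolding clique_number_def
    using fin ne by (subst Max_le_iff) (auto dest: clique_card[OF assms])
qed

lemma no_colouring:
  assumes "n \<ge> 3" "proper_colouring (VV n) (EE n) n c"
  shows False
proof -
  have lt: "\<And>v. v \<in> {0..2*n} \<Longrightarrow> c v < n"
   and pr: "\<And>u v. u \<in> {0..2*n} \<Longrightarrow> v \<in> {0..2*n} \<Longrightarrow> PP n u v \<Longrightarrow> c u \<noteq> c v"
    using assms(2) unfolding proper_colouring_def VV_def adj_EE by auto
  have img: "\<And>S. S \<subseteq> {0..2*n} \<Longrightarrow> card S = n \<Longrightarrow> (\<And>u v. u \<in> S \<Longrightarrow> v \<in> S \<Longrightarrow> u \<noteq> v \<Longrightarrow> PP n u v)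
      \<Longrightarrow> c ` S = {..<n}"
  proof -
    fix S assume S: "S \<subseteq> {0..2*n}" "card S = n" "\<And>u v. u \<in> S \<Longrightarrow> v \<in> S \<Longrightarrow> u \<noteq> v \<Longrightarrow> PP n u v"
    have "inj_on c S" unfolding inj_on_def using S pr by blast
    hence "card (c ` S) = n" using S by (simp add: card_image)
    moreover have "c ` S \<subseteq> {..<n}" using S lt by auto
    ultimately show "c ` S = {..<n}" by (simp add: card_subset_eq)
  qed
  have A: "c ` {1..n} = {..<n}" by (rule img) (auto simp: PP_def)
  have B: "c ` {n+1..2*n} = {..<n}" by (rule img) (auto simp: PP_def)
  have c0: "c 0 < n" using lt by simp
  obtain a where a: "a \<in> {1..n}" "c a = c 0" using A c0 by (metis imageE lessThan_iff)
  obtain b where b: "b \<in> {n+1..2*n}" "c b = c 0" using B c0 by (metis imageE lessThan_iff)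
  have "a = 1"
  proof (rule ccontr)
    assume "a \<noteq> 1" hence "PP n 0 a" using a by (auto simp: PP_def)
    thus False using pr[of 0 a] a by auto
  qed
  have "b = n+1"
  proof (rule ccontr)
    assume "b \<noteq> n+1" hence "PP n 0 b" using b by (auto simp: PP_def)
    thus False using pr[of 0 b] b by auto
  qed
  have "PP n 1 (n+1)" using assms by (auto simp: PP_def)
  thus False using pr[of 1 "n+1"] a b \<open>a = 1\<close> \<open>b = n+1\<close> assms by auto
qed

lemma colouring_exists:
  assumes "n \<ge> 3"
  shows "\<exists>c. proper_colouring (VV n) (EE n) (n+1) c"
proof -
  define c where "c v = (if v = 0 then n else if v \<le> n then v - 1 else if v = 2*n then 0 else v - n)" for v
  have "proper_colouring (VV n) (EE n) (n+1) c"
    unfolding proper_colouring_def VV_def adj_EE c_def PP_def using assms by auto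
  thus ?thesis by blast
qed

lemma chrom:
  assumes "n \<ge> 3"
  shows "chromatic_number (VV n) (EE n) > n"
proof -
  let ?k = "chromatic_number (VV n) (EE n)"
  have "\<exists>c. proper_colouring (VV n) (EE n) ?k c"
    unfolding chromatic_number_def by (rule LeastI_ex) (use colouring_exists[OF assms] in blast)
  then obtain c where c: "proper_colouring (VV n) (EE n) ?k c" by blast
  show ?thesis
  proof (rule ccontr)
    assume "\<not> ?thesis"
    hence "proper_colouring (VV n) (EE n) n c" using c unfolding proper_colouring_def by fastforce
    thus False using no_colouring[OF assms] by blast
  qed
qed

theorem mainTheorem7:
  fixes t :: int
  shows "\<exists>(V :: nat set) E. simple_graph V E \<and> int (Delta2 V E) \<ge> t \<and>
           chromatic_number V E > max (clique_number V E) (Delta2 V E)"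
proof -
  define n where "n = max 3 (nat t)"
  have n: "n \<ge> 3" "int n \<ge> t" unfolding n_def by auto
  show ?thesis
    apply (rule exI[of _ "VV n"], rule exI[of _ "EE n"])
    using simple Delta2_val[OF n(1)] clique_le[OF n(1)] chrom[OF n(1)] n by auto
qed

end
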